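(* Let $K$ be a field, $I$ a monomial ideal in $R=K[x_1,\ldots,x_n]$, and $1\le j\le n$. If $I$ has the copersistence property, then the contraction $I/x_j$ has the copersistence property.
   Context: An ideal $I$ in a commutative Noetherian ring $R$ has the copersistence property if $\mathrm{Ass}_R(R/I^k)\supseteq\mathrm{Ass}_R(R/I^{k+1})$ for all $k\ge1$. If $\{u_1,\ldots,u_m\}$ is the minimal monomial generating set of $I$, the contraction $I/x_j$ is the monomial ideal (in the polynomial ring over $K$ in the variables other than $x_j$) generated by the monomials obtained from $u_1,\ldots,u_m$ by setting $x_j=1$. *)

theory Defs
  imports "HOL-Library.Poly_Mapping"
begin

text \<open>Multivariate polynomials over a field 'k in variables indexed by nat:
  a monomial x^m is a finitely supported exponent vector m, a polynomial is a
  finitely supported map from monomials to coefficients (multiplication is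
  convolution, from HOL-Library.Poly_Mapping).\<close>

type_synonym 'k mpoly = "(nat \<Rightarrow>\<^sub>0 nat) \<Rightarrow>\<^sub>0 'k"

definition poly_ring :: "nat set \<Rightarrow> ('k::field) mpoly set" where
  "poly_ring V = {p :: 'k mpoly. \<forall>m\<in>Poly_Mapping.keys p. Poly_Mapping.keys m \<subseteq> V}"

definition is_ideal_in :: "('k::field) mpoly set \<Rightarrow> 'k mpoly set \<Rightarrow> bool" where
  "is_ideal_in R I \<longleftrightarrow> I \<subseteq> R \<and> 0 \<in> I \<and> (\<forall>a\<in>I. \<forall>b\<in>I. a + b \<in> I)
     \<and> (\<forall>r\<in>R. \<forall>a\<in>I. r * a \<in> I)"

definition ideal_gen :: "('k::field) mpoly set \<Rightarrow> 'k mpoly set \<Rightarrow> 'k mpoly set" where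
  "ideal_gen R S = \<Inter>{J. is_ideal_in R J \<and> S \<subseteq> J}"

definition prime_ideal_in :: "('k::field) mpoly set \<Rightarrow> 'k mpoly set \<Rightarrow> bool" where
  "prime_ideal_in R P \<longleftrightarrow> is_ideal_in R P \<and> P \<noteq> R \<and>
     (\<forall>a\<in>R. \<forall>b\<in>R. a * b \<in> P \<longrightarrow> a \<in> P \<or> b \<in> P)"

text \<open>Ass_R(R/I): primes of R that are annihilators of an element of R/I.\<close>
definition Ass :: "('k::field) mpoly set \<Rightarrow> 'k mpoly set \<Rightarrow> 'k mpoly set set" where
  "Ass R I = {P. prime_ideal_in R P \<and> (\<exists>f\<in>R. P = {g\<in>R. g * f \<in> I})}"

fun ideal_pow :: "('k::field) mpoly set \<Rightarrow> 'k mpoly set \<Rightarrow> nat \<Rightarrow> 'k mpoly set" where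
  "ideal_pow R I 0 = R"
| "ideal_pow R I (Suc k) = ideal_gen R {a * b | a b. a \<in> ideal_pow R I k \<and> b \<in> I}"

definition copersistent :: "('k::field) mpoly set \<Rightarrow> 'k mpoly set \<Rightarrow> bool" where
  "copersistent R I \<longleftrightarrow> (\<forall>k\<ge>1. Ass R (ideal_pow R I (Suc k)) \<subseteq> Ass R (ideal_pow R I k))"

definition mono_poly :: "(nat \<Rightarrow>\<^sub>0 nat) \<Rightarrow> ('k::field) mpoly" where
  "mono_poly m = Poly_Mapping.single m 1"

definition mon_dvd :: "(nat \<Rightarrow>\<^sub>0 nat) \<Rightarrow> (nat \<Rightarrow>\<^sub>0 nat) \<Rightarrow> bool" where
  "mon_dvd a b \<longleftrightarrow> (\<forall>i. Poly_Mapping.lookup a i \<le> Poly_Mapping.lookup b i)"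

definition monomial_ideal :: "nat set \<Rightarrow> ('k::field) mpoly set \<Rightarrow> bool" where
  "monomial_ideal V I \<longleftrightarrow> is_ideal_in (poly_ring V) I \<and>
     I = ideal_gen (poly_ring V) {mono_poly m | m. Poly_Mapping.keys m \<subseteq> V \<and> mono_poly m \<in> I}"

definition min_mon_gens :: "nat set \<Rightarrow> ('k::field) mpoly set \<Rightarrow> (nat \<Rightarrow>\<^sub>0 nat) set" where
  "min_mon_gens V I = {m. Poly_Mapping.keys m \<subseteq> V \<and> mono_poly m \<in> I \<and>
     \<not> (\<exists>m'. m' \<noteq> m \<and> mon_dvd m' m \<and> Poly_Mapping.keys m' \<subseteq> V \<and> mono_poly m' \<in> I)}"

text \<open>Contraction I/x_j: ideal of K[x_i : i in V - {j}] generated by the minimal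
  generators with x_j set to 1.\<close>
definition contraction :: "nat set \<Rightarrow> nat \<Rightarrow> ('k::field) mpoly set \<Rightarrow> 'k mpoly set" where
  "contraction V j I = ideal_gen (poly_ring (V - {j}))
     {mono_poly (m - Poly_Mapping.single j (Poly_Mapping.lookup m j)) | m. m \<in> min_mon_gens V I}"

end

theory Submission
  imports Defs
begin

abbreviation keys :: "('a \<Rightarrow>\<^sub>0 'b::zero) \<Rightarrow> 'a set" where "keys \<equiv> Poly_Mapping.keys"
abbreviation lookup :: "('a \<Rightarrow>\<^sub>0 'b::zero) \<Rightarrow> 'a \<Rightarrow> 'b" where "lookup \<equiv> Poly_Mapping.lookup"

lemma lookup_single_if: "lookup (Poly_Mapping.single i n) k = (if i = k then n else 0)"
  by (simp add: lookup_single when_def)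

lemma keys_mono_poly[simp]: "keys (mono_poly m :: ('k::field) mpoly) = {m}"
  by (simp add: mono_poly_def)

lemma mono_poly_add: "(mono_poly (a + b) :: ('k::field) mpoly) = mono_poly a * mono_poly b"
  by (simp add: mono_poly_def mult_single)

lemma mono_poly_zero: "(mono_poly 0 :: ('k::field) mpoly) = 1"
  by (simp add: mono_poly_def)

lemma keys_add_nat: "keys (a + b :: nat \<Rightarrow>\<^sub>0 nat) = keys a \<union> keys b"
  by (auto simp: in_keys_iff lookup_add)

lemma mon_dvd_refl[simp]: "mon_dvd a a" by (simp add: mon_dvd_def)
lemma mon_dvd_trans: "mon_dvd a b \<Longrightarrow> mon_dvd b c \<Longrightarrow> mon_dvd a c"
  unfolding mon_dvd_def using le_trans by blast
lemma mon_dvd_add_right[simp]: "mon_dvd a (a + c)" by (simp add: mon_dvd_def lookup_add)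
lemma mon_dvd_add_mono: "mon_dvd a b \<Longrightarrow> mon_dvd c d \<Longrightarrow> mon_dvd (a + c) (b + d)"
  by (simp add: mon_dvd_def lookup_add add_mono)
lemma mon_dvd_decomp: "mon_dvd a b \<Longrightarrow> b = a + (b - a)"
  by (rule poly_mapping_eqI) (simp add: mon_dvd_def lookup_add lookup_minus)
lemma keys_minus_nat: "keys (b - a :: nat \<Rightarrow>\<^sub>0 nat) \<subseteq> keys b"
  by (auto simp: in_keys_iff lookup_minus)

definition vexps :: "nat set \<Rightarrow> (nat \<Rightarrow>\<^sub>0 nat) set" where
  "vexps V = {m. keys m \<subseteq> V}"

definition upcl :: "nat set \<Rightarrow> (nat \<Rightarrow>\<^sub>0 nat) set \<Rightarrow> bool" where
  "upcl V E \<longleftrightarrow> E \<subseteq> vexps V \<and> (\<forall>a\<in>E. \<forall>b\<in>vexps V. mon_dvd a b \<longrightarrow> b \<in> E)"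

definition mid :: "nat set \<Rightarrow> (nat \<Rightarrow>\<^sub>0 nat) set \<Rightarrow> ('k::field) mpoly set" where
  "mid V E = {p \<in> poly_ring V. keys p \<subseteq> E}"

definition up :: "nat set \<Rightarrow> (nat \<Rightarrow>\<^sub>0 nat) set \<Rightarrow> (nat \<Rightarrow>\<^sub>0 nat) set" where
  "up V G = {c \<in> vexps V. \<exists>m\<in>G. mon_dvd m c}"

lemma vexps_add[simp]: "a + b \<in> vexps V \<longleftrightarrow> a \<in> vexps V \<and> b \<in> vexps V"
  by (auto simp: vexps_def keys_add_nat)

lemma vexps_minus: "b \<in> vexps V \<Longrightarrow> b - a \<in> vexps V"
  using keys_minus_nat by (auto simp: vexps_def)

lemma vexps_zero[simp]: "0 \<in> vexps V" by (simp add: vexps_def)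

lemma poly_ring_iff: "p \<in> poly_ring V \<longleftrightarrow> keys p \<subseteq> vexps V"
  by (auto simp: poly_ring_def vexps_def)

lemma poly_ring_add: "p \<in> poly_ring V \<Longrightarrow> q \<in> poly_ring V \<Longrightarrow> p + q \<in> poly_ring V"
proof -
  assume "p \<in> poly_ring V" "q \<in> poly_ring V"
  hence "keys p \<union> keys q \<subseteq> vexps V" by (simp add: poly_ring_iff)
  thus ?thesis unfolding poly_ring_iff using keys_add order_trans by metis
qed

lemma poly_ring_mult: "p \<in> poly_ring V \<Longrightarrow> q \<in> poly_ring V \<Longrightarrow> p * q \<in> poly_ring V"
proof -
  assume p: "p \<in> poly_ring V" and q: "q \<in> poly_ring V"
  show ?thesis unfolding poly_ring_iff
  proof
    fix c assume "c \<in> keys (p * q)"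
    then obtain a b where "c = a + b" "a \<in> keys p" "b \<in> keys q" using keys_mult by blast
    thus "c \<in> vexps V" using p q by (auto simp: poly_ring_iff)
  qed
qed

lemma poly_ring_uminus: "p \<in> poly_ring V \<Longrightarrow> - p \<in> poly_ring V"
  unfolding poly_ring_iff by (simp add: keys_minus)

lemma poly_ring_diff: "p \<in> poly_ring V \<Longrightarrow> q \<in> poly_ring V \<Longrightarrow> p - q \<in> poly_ring V"
  by (metis diff_conv_add_uminus poly_ring_add poly_ring_uminus)

lemma poly_ring_zero[simp]: "0 \<in> poly_ring V" by (simp add: poly_ring_iff)
lemma poly_ring_one[simp]: "1 \<in> poly_ring V" by (simp add: poly_ring_iff)
lemma poly_ring_single: "keys c \<subseteq> V \<Longrightarrow> Poly_Mapping.single c k \<in> poly_ring V"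
  by (simp add: poly_ring_iff vexps_def)
lemma poly_ring_const: "Poly_Mapping.single 0 k \<in> poly_ring V"
  by (simp add: poly_ring_iff)
lemma poly_ring_mono: "m \<in> vexps V \<Longrightarrow> (mono_poly m :: ('k::field) mpoly) \<in> poly_ring V"
  by (simp add: poly_ring_iff)

lemma poly_ring_sum: "(\<And>x. x \<in> A \<Longrightarrow> f x \<in> poly_ring V) \<Longrightarrow> sum f A \<in> poly_ring V"
proof (induction A rule: infinite_finite_induct)
  case (insert x F)
  then show ?case by (simp add: poly_ring_add)
qed simp_all

lemma poly_ring_power: "p \<in> poly_ring V \<Longrightarrow> p ^ n \<in> poly_ring V"
  by (induction n) (auto intro: poly_ring_mult)

lemma poly_ring_ideal: "is_ideal_in (poly_ring V) (poly_ring V)"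
  by (simp add: is_ideal_in_def poly_ring_add poly_ring_mult)

lemma ideal_uminus: "is_ideal_in (poly_ring V) I \<Longrightarrow> a \<in> I \<Longrightarrow> - a \<in> I"
proof -
  assume I: "is_ideal_in (poly_ring V) I" and a: "a \<in> I"
  have "(-1) * a \<in> I" using I a poly_ring_uminus[OF poly_ring_one] unfolding is_ideal_in_def by blast
  thus ?thesis by simp
qed

lemma ideal_add: "is_ideal_in R I \<Longrightarrow> a \<in> I \<Longrightarrow> b \<in> I \<Longrightarrow> a + b \<in> I"
  by (simp add: is_ideal_in_def)
lemma ideal_zero: "is_ideal_in R I \<Longrightarrow> 0 \<in> I"
  by (simp add: is_ideal_in_def)
lemma ideal_multL: "is_ideal_in R I \<Longrightarrow> r \<in> R \<Longrightarrow> a \<in> I \<Longrightarrow> r * a \<in> I"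
  by (simp add: is_ideal_in_def)
lemma ideal_multR: "is_ideal_in R I \<Longrightarrow> r \<in> R \<Longrightarrow> a \<in> I \<Longrightarrow> a * r \<in> I"
  by (metis ideal_multL mult.commute)
lemma ideal_sub: "is_ideal_in R I \<Longrightarrow> I \<subseteq> R"
  by (simp add: is_ideal_in_def)

lemma ideal_diff: "is_ideal_in (poly_ring V) I \<Longrightarrow> a \<in> I \<Longrightarrow> b \<in> I \<Longrightarrow> a - b \<in> I"
  by (metis diff_conv_add_uminus ideal_add ideal_uminus)

lemma ideal_sum: "is_ideal_in R I \<Longrightarrow> (\<And>x. x \<in> A \<Longrightarrow> f x \<in> I) \<Longrightarrow> sum f A \<in> I"
proof (induction A rule: infinite_finite_induct)
  case (insert x F)
  then show ?case by (simp add: ideal_add)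
qed (simp_all add: ideal_zero)

lemma ideal_gen_least: "is_ideal_in R J \<Longrightarrow> S \<subseteq> J \<Longrightarrow> ideal_gen R S \<subseteq> J"
  unfolding ideal_gen_def by blast

lemma ideal_gen_sup: "S \<subseteq> ideal_gen R S"
  unfolding ideal_gen_def by blast

lemma ideal_gen_ideal:
  assumes "S \<subseteq> poly_ring V"
  shows "is_ideal_in (poly_ring V) (ideal_gen (poly_ring V) S)"
proof -
  have ne: "poly_ring V \<in> {J. is_ideal_in (poly_ring V) J \<and> S \<subseteq> J}" using assms poly_ring_ideal by blast
  have 1: "ideal_gen (poly_ring V) S \<subseteq> poly_ring V" using ne unfolding ideal_gen_def by (rule Inter_lower)
  have 2: "0 \<in> ideal_gen (poly_ring V) S" unfolding ideal_gen_def
    by (rule InterI) (blast intro: ideal_zero)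
  have 3: "a + b \<in> ideal_gen (poly_ring V) S" if "a \<in> ideal_gen (poly_ring V) S" "b \<in> ideal_gen (poly_ring V) S" for a b
    unfolding ideal_gen_def
  proof (rule InterI)
    fix J assume J: "J \<in> {J. is_ideal_in (poly_ring V) J \<and> S \<subseteq> J}"
    have "a \<in> J" "b \<in> J" using that J unfolding ideal_gen_def by (auto dest: InterD)
    thus "a + b \<in> J" using J ideal_add by blast
  qed
  have 4: "r * a \<in> ideal_gen (poly_ring V) S" if "r \<in> poly_ring V" "a \<in> ideal_gen (poly_ring V) S" for r a
    unfolding ideal_gen_def
  proof (rule InterI)
    fix J assume J: "J \<in> {J. is_ideal_in (poly_ring V) J \<and> S \<subseteq> J}"
    have "a \<in> J" using that J unfolding ideal_gen_def by (auto dest: InterD)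
    thus "r * a \<in> J" using J that(1) ideal_multL by blast
  qed
  show ?thesis unfolding is_ideal_in_def by (simp add: 1 2 3 4)
qed

lemma poly_expand: "p = (\<Sum>c\<in>keys p. Poly_Mapping.single c (lookup p c))"
proof (rule poly_mapping_eqI)
  fix k
  have "lookup (\<Sum>c\<in>keys p. Poly_Mapping.single c (lookup p c)) k
      = (\<Sum>c\<in>keys p. (if c = k then lookup p c else 0))"
    by (simp add: lookup_sum lookup_single_if)
  also have "\<dots> = lookup p k"
    by (simp add: sum.delta) (metis not_in_keys_iff_lookup_eq_zero)
  finally show "lookup p k = lookup (\<Sum>c\<in>keys p. Poly_Mapping.single c (lookup p c)) k" by simp
qed

lemma single_as_mono: "(Poly_Mapping.single c k :: ('k::field) mpoly) = Poly_Mapping.single 0 k * mono_poly c"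
  by (simp add: mono_poly_def mult_single)

lemma mid_sub_ideal:
  fixes J :: "('k::field) mpoly set"
  assumes J: "is_ideal_in (poly_ring V) J" and F: "\<And>m. m \<in> F \<Longrightarrow> mono_poly m \<in> J"
  shows "mid V F \<subseteq> J"
proof
  fix p :: "'k mpoly" assume "p \<in> mid V F"
  hence kp: "keys p \<subseteq> F" by (auto simp: mid_def)
  have "p = (\<Sum>c\<in>keys p. Poly_Mapping.single c (lookup p c))" by (rule poly_expand)
  also have "\<dots> = (\<Sum>c\<in>keys p. Poly_Mapping.single 0 (lookup p c) * mono_poly c)"
    by (rule sum.cong[OF refl]) (rule single_as_mono)
  also have "\<dots> \<in> J"
  proof (rule ideal_sum[OF J])
    fix c assume "c \<in> keys p"
    hence "mono_poly c \<in> J" using kp F by blast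
    thus "Poly_Mapping.single 0 (lookup p c) * mono_poly c \<in> J"
      by (rule ideal_multL[OF J poly_ring_const])
  qed
  finally show "p \<in> J" .
qed



lemma mono_decomp: "mon_dvd m c \<Longrightarrow> (mono_poly c :: ('k::field) mpoly) = mono_poly (c - m) * mono_poly m"
  by (metis mon_dvd_decomp mono_poly_add mult.commute)

lemma mid_ideal:
  assumes E: "upcl V E"
  shows "is_ideal_in (poly_ring V) (mid V E :: ('k::field) mpoly set)"
  unfolding is_ideal_in_def
proof (intro conjI ballI)
  show "mid V E \<subseteq> poly_ring V" by (auto simp: mid_def)
  show "(0::'k mpoly) \<in> mid V E" by (simp add: mid_def)
  fix a b :: "'k mpoly"
  assume a: "a \<in> mid V E"
  { assume b: "b \<in> mid V E"
    have "keys a \<union> keys b \<subseteq> E" using a b by (simp add: mid_def)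
    hence "keys (a + b) \<subseteq> E" using keys_add order_trans by metis
    thus "a + b \<in> mid V E" using a b by (simp add: mid_def poly_ring_add) }
  { assume b: "b \<in> poly_ring V"
    have "keys (b * a) \<subseteq> E"
    proof
      fix c assume "c \<in> keys (b * a)"
      then obtain x y where c: "c = x + y" "x \<in> keys b" "y \<in> keys a" using keys_mult by blast
      have "x \<in> vexps V" using c b by (auto simp: poly_ring_iff)
      moreover have "y \<in> E" using c a by (auto simp: mid_def)
      moreover have "y \<in> vexps V" using E \<open>y \<in> E\<close> by (auto simp: upcl_def)
      moreover have "mon_dvd y (x + y)" by (metis mon_dvd_add_right add.commute)
      ultimately show "c \<in> E" using E c(1) unfolding upcl_def by simp
    qed
    thus "b * a \<in> mid V E" using a b by (simp add: mid_def poly_ring_mult) }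
qed

lemma mono_in_mid: "(mono_poly m :: ('k::field) mpoly) \<in> mid V F \<longleftrightarrow> m \<in> vexps V \<and> m \<in> F"
  by (simp add: mid_def poly_ring_iff)

lemma mid_sub_ring: "mid V F \<subseteq> poly_ring V"
  by (auto simp: mid_def)

lemma gen_eq:
  fixes S :: "('k::field) mpoly set"
  assumes F: "upcl V F" and S: "S \<subseteq> mid V F"
    and M: "\<And>m. m \<in> F \<Longrightarrow> mono_poly m \<in> ideal_gen (poly_ring V) S"
  shows "ideal_gen (poly_ring V) S = mid V F"
proof
  show "ideal_gen (poly_ring V) S \<subseteq> mid V F"
    by (rule ideal_gen_least[OF mid_ideal[OF F] S])
  have "S \<subseteq> poly_ring V" using S mid_sub_ring by blast
  from ideal_gen_ideal[OF this] show "mid V F \<subseteq> ideal_gen (poly_ring V) S"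
    by (rule mid_sub_ideal) (rule M)
qed

lemma up_upcl: "upcl V (up V G)"
  unfolding upcl_def up_def by (auto intro: mon_dvd_trans)

lemma up_of_upcl: "upcl V E \<Longrightarrow> up V E = E"
  unfolding upcl_def up_def by (auto intro: mon_dvd_refl)

lemma gen_mono:
  assumes G: "G \<subseteq> vexps V"
  shows "ideal_gen (poly_ring V) {mono_poly m |m. m \<in> G} = (mid V (up V G) :: ('k::field) mpoly set)"
proof (rule gen_eq[OF up_upcl])
  show "{mono_poly m |m. m \<in> G} \<subseteq> (mid V (up V G) :: 'k mpoly set)"
  proof
    fix x :: "'k mpoly" assume "x \<in> {mono_poly m |m. m \<in> G}"
    then obtain m where "x = mono_poly m" "m \<in> G" by blast
    moreover have "m \<in> vexps V" using G \<open>m \<in> G\<close> by blast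
    ultimately show "x \<in> (mid V (up V G) :: 'k mpoly set)"
      by (auto simp: mono_in_mid up_def intro!: bexI[of _ m])
  qed
  fix c assume "c \<in> up V G"
  then obtain m where m: "m \<in> G" "mon_dvd m c" "c \<in> vexps V" by (auto simp: up_def)
  have "{mono_poly m |m. m \<in> G} \<subseteq> (poly_ring V :: 'k mpoly set)"
  proof
    fix x :: "'k mpoly" assume "x \<in> {mono_poly m |m. m \<in> G}"
    then obtain m' where "x = mono_poly m'" "m' \<in> G" by blast
    thus "x \<in> poly_ring V" using G by (auto simp: poly_ring_mono)
  qed
  note I = ideal_gen_ideal[OF this]
  have "(mono_poly m :: 'k mpoly) \<in> {mono_poly m |m. m \<in> G}" using m(1) by blast
  hence mi: "(mono_poly m :: 'k mpoly) \<in> ideal_gen (poly_ring V) {mono_poly m |m. m \<in> G}"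
    using ideal_gen_sup by (rule subsetD[rotated])
  have "(mono_poly (c - m) :: 'k mpoly) \<in> poly_ring V"
    by (rule poly_ring_mono) (rule vexps_minus[OF m(3)])
  from ideal_multL[OF I this mi]
  show "(mono_poly c :: 'k mpoly) \<in> ideal_gen (poly_ring V) {mono_poly m |m. m \<in> G}"
    by (subst mono_decomp[OF m(2)])
qed

lemma mid_eq_iff:
  assumes "F \<subseteq> vexps V" "F' \<subseteq> vexps V"
  shows "(mid V F :: ('k::field) mpoly set) = mid V F' \<longleftrightarrow> F = F'"
proof
  assume eq: "(mid V F :: 'k mpoly set) = mid V F'"
  show "F = F'"
  proof (intro set_eqI iffI)
    fix m assume "m \<in> F"
    hence "(mono_poly m :: 'k mpoly) \<in> mid V F" using assms by (auto simp: mono_in_mid)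
    thus "m \<in> F'" using eq by (simp add: mono_in_mid)
  next
    fix m assume "m \<in> F'"
    hence "(mono_poly m :: 'k mpoly) \<in> mid V F'" using assms by (auto simp: mono_in_mid)
    thus "m \<in> F" using eq[symmetric] by (simp add: mono_in_mid)
  qed
qed simp

lemma mid_vexps: "mid V (vexps V) = poly_ring V"
  by (auto simp: mid_def poly_ring_iff)



lemma monomial_mid:
  fixes I :: "('k::field) mpoly set"
  assumes "monomial_ideal V I"
  shows "\<exists>E. upcl V E \<and> I = mid V E"
proof -
  define G where "G = {m. keys m \<subseteq> V \<and> mono_poly m \<in> I}"
  have G: "G \<subseteq> vexps V" by (auto simp: G_def vexps_def)
  have eq: "{mono_poly m | m. keys m \<subseteq> V \<and> mono_poly m \<in> I} = {(mono_poly m :: 'k mpoly) | m. m \<in> G}"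
    by (simp add: G_def)
  have "I = ideal_gen (poly_ring V) {mono_poly m | m. keys m \<subseteq> V \<and> mono_poly m \<in> I}"
    using assms by (simp add: monomial_ideal_def)
  also have "\<dots> = mid V (up V G)" unfolding eq by (rule gen_mono[OF G])
  finally show ?thesis using up_upcl by blast
qed

definition er :: "nat \<Rightarrow> (nat \<Rightarrow>\<^sub>0 nat) \<Rightarrow> (nat \<Rightarrow>\<^sub>0 nat)" where
  "er j m = m - Poly_Mapping.single j (lookup m j)"

lemma lookup_er: "lookup (er j m) i = (if i = j then 0 else lookup m i)"
  by (simp add: er_def lookup_minus lookup_single_if)

lemma er_vexps: "m \<in> vexps V \<Longrightarrow> er j m \<in> vexps (V - {j})"
  by (auto simp: vexps_def in_keys_iff lookup_er split: if_splits)

definition sat :: "nat set \<Rightarrow> nat \<Rightarrow> (nat \<Rightarrow>\<^sub>0 nat) set \<Rightarrow> (nat \<Rightarrow>\<^sub>0 nat) set" where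
  "sat V j E = {c \<in> vexps (V - {j}). \<exists>N. c + Poly_Mapping.single j N \<in> E}"

lemma vexps_plus_single: "j \<in> V \<Longrightarrow> c \<in> vexps (V - {j}) \<Longrightarrow> c + Poly_Mapping.single j N \<in> vexps V"
  by (auto simp: vexps_def keys_add_nat)

lemma vexps_mono: "V' \<subseteq> V \<Longrightarrow> c \<in> vexps V' \<Longrightarrow> c \<in> vexps V"
  by (auto simp: vexps_def)

definition deg :: "nat set \<Rightarrow> (nat \<Rightarrow>\<^sub>0 nat) \<Rightarrow> nat" where
  "deg V m = sum (lookup m) V"

lemma deg_less:
  assumes V: "finite V" and e: "e \<in> vexps V" and d: "mon_dvd m e" and ne: "m \<noteq> e"
  shows "deg V m < deg V e"
proof -
  obtain i where i: "lookup m i \<noteq> lookup e i" using ne by (metis poly_mapping_eqI)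
  hence lt: "lookup m i < lookup e i" using d by (simp add: mon_dvd_def le_neq_implies_less)
  hence "i \<in> keys e" by (simp add: in_keys_iff)
  hence "i \<in> V" using e by (auto simp: vexps_def)
  show ?thesis unfolding deg_def
    by (rule sum_strict_mono_ex1[OF V]) (use d lt \<open>i \<in> V\<close> in \<open>auto simp: mon_dvd_def\<close>)
qed

lemma exists_min_gen:
  fixes I :: "('k::field) mpoly set"
  assumes V: "finite V" and E: "upcl V E" and I: "I = mid V E" and e: "e \<in> E"
  shows "\<exists>m\<in>min_mon_gens V I. mon_dvd m e"
proof -
  have "\<forall>e. e \<in> E \<and> deg V e = n \<longrightarrow> (\<exists>m\<in>min_mon_gens V I. mon_dvd m e)" for n
  proof (induction n rule: less_induct)
    case (less n)
    show ?case
    proof (intro allI impI)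
      fix e assume en: "e \<in> E \<and> deg V e = n"
      have ev: "e \<in> vexps V" using E en by (auto simp: upcl_def)
      show "\<exists>m\<in>min_mon_gens V I. mon_dvd m e"
      proof (cases "e \<in> min_mon_gens V I")
        case True thus ?thesis by (intro bexI[of _ e]) simp_all
      next
        case False
        then obtain m' where m': "m' \<noteq> e" "mon_dvd m' e" "keys m' \<subseteq> V" "mono_poly m' \<in> I"
          using en ev I by (auto simp: min_mon_gens_def mono_in_mid vexps_def)
        have "m' \<in> E" using m' I by (simp add: mono_in_mid)
        moreover have "deg V m' < n" using deg_less[OF V ev m'(2) m'(1)] en by simp
        ultimately obtain m where "m \<in> min_mon_gens V I" "mon_dvd m m'" using less by blast
        thus ?thesis using m'(2) mon_dvd_trans by blast
      qed
    qed
  qed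
  thus ?thesis using e by blast
qed

lemma min_gens_sub:
  fixes I :: "('k::field) mpoly set"
  assumes I: "I = mid V E"
  shows "min_mon_gens V I \<subseteq> E" "min_mon_gens V I \<subseteq> vexps V"
  using I by (auto simp: min_mon_gens_def mono_in_mid vexps_def)

lemma contraction_mid:
  fixes I :: "('k::field) mpoly set"
  assumes V: "finite V" and j: "j \<in> V" and E: "upcl V E" and I: "I = mid V E"
  shows "contraction V j I = mid (V - {j}) (sat V j E)"
proof -
  let ?G = "er j ` min_mon_gens V I"
  have G: "?G \<subseteq> vexps (V - {j})" using min_gens_sub(2)[OF I] er_vexps by blast
  have eq: "{mono_poly (m - Poly_Mapping.single j (lookup m j)) | m. m \<in> min_mon_gens V I}
     = {(mono_poly m :: 'k mpoly) | m. m \<in> ?G}"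
    by (auto simp: er_def)
  have "contraction V j I = mid (V - {j}) (up (V - {j}) ?G)"
    unfolding contraction_def eq by (rule gen_mono[OF G])
  also have "up (V - {j}) ?G = sat V j E"
  proof (intro set_eqI iffI)
    fix c assume "c \<in> up (V - {j}) ?G"
    then obtain m where m: "m \<in> min_mon_gens V I" "mon_dvd (er j m) c" and c: "c \<in> vexps (V - {j})"
      by (auto simp: up_def)
    have "mon_dvd m (c + Poly_Mapping.single j (lookup m j))"
      using m(2) by (auto simp: mon_dvd_def lookup_add lookup_single_if lookup_er split: if_splits)
    moreover have "m \<in> E" using m(1) min_gens_sub(1)[OF I] by blast
    moreover have "c + Poly_Mapping.single j (lookup m j) \<in> vexps V" using vexps_plus_single[OF j c] .
    ultimately have "c + Poly_Mapping.single j (lookup m j) \<in> E" using E by (auto simp: upcl_def)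
    thus "c \<in> sat V j E" using c by (auto simp: sat_def)
  next
    fix c assume "c \<in> sat V j E"
    then obtain N where c: "c \<in> vexps (V - {j})" "c + Poly_Mapping.single j N \<in> E"
      by (auto simp: sat_def)
    then obtain m where m: "m \<in> min_mon_gens V I" "mon_dvd m (c + Poly_Mapping.single j N)"
      using exists_min_gen[OF V E I] by blast
    have "mon_dvd (er j m) c"
      using m(2) unfolding mon_dvd_def
      by (metis add.right_neutral le0 lookup_add lookup_er lookup_single_if)
    thus "c \<in> up (V - {j}) ?G" using c m(1) by (auto simp: up_def)
  qed
  finally show ?thesis .
qed



definition pset :: "nat set \<Rightarrow> (nat \<Rightarrow>\<^sub>0 nat) set \<Rightarrow> (nat \<Rightarrow>\<^sub>0 nat) set \<Rightarrow> (nat \<Rightarrow>\<^sub>0 nat) set" where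
  "pset V A B = {c \<in> vexps V. \<exists>a\<in>A. \<exists>b\<in>B. mon_dvd (a + b) c}"

lemma pset_upcl: "upcl V (pset V A B)"
  unfolding upcl_def pset_def by (auto intro: mon_dvd_trans)

lemma gen_prod:
  assumes A: "upcl V A" and B: "upcl V B"
  shows "ideal_gen (poly_ring V) {a * b | a b. a \<in> mid V A \<and> b \<in> mid V B}
       = (mid V (pset V A B) :: ('k::field) mpoly set)"
proof (rule gen_eq[OF pset_upcl])
  show S: "{a * b | a b. a \<in> mid V A \<and> b \<in> mid V B} \<subseteq> (mid V (pset V A B) :: 'k mpoly set)"
  proof
    fix x :: "'k mpoly" assume "x \<in> {a * b | a b. a \<in> mid V A \<and> b \<in> mid V B}"
    then obtain a b where x: "x = a * b" "a \<in> mid V A" "b \<in> mid V B" by blast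
    have "keys x \<subseteq> pset V A B"
    proof
      fix c assume "c \<in> keys x"
      then obtain y z where c: "c = y + z" "y \<in> keys a" "z \<in> keys b" using keys_mult x(1) by blast
      have "y \<in> A" "z \<in> B" using c x by (auto simp: mid_def)
      moreover have "y \<in> vexps V" "z \<in> vexps V" using \<open>y \<in> A\<close> \<open>z \<in> B\<close> A B by (auto simp: upcl_def)
      moreover have "mon_dvd (y + z) c" using c(1) by simp
      moreover have "c \<in> vexps V" using c(1) \<open>y \<in> vexps V\<close> \<open>z \<in> vexps V\<close> by simp
      ultimately show "c \<in> pset V A B" unfolding pset_def by blast
    qed
    moreover have "x \<in> poly_ring V" using x poly_ring_mult mid_sub_ring by blast
    ultimately show "x \<in> mid V (pset V A B)" by (simp add: mid_def)
  qed
  fix c assume "c \<in> pset V A B"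
  then obtain a b where ab: "a \<in> A" "b \<in> B" "mon_dvd (a + b) c" and c: "c \<in> vexps V"
    by (auto simp: pset_def)
  have av: "a \<in> vexps V" "b \<in> vexps V" using ab A B by (auto simp: upcl_def)
  have "(mono_poly a :: 'k mpoly) \<in> mid V A" "(mono_poly b :: 'k mpoly) \<in> mid V B"
    using ab av by (simp_all add: mono_in_mid)
  hence "(mono_poly a * mono_poly b :: 'k mpoly) \<in> {a * b | a b. a \<in> mid V A \<and> b \<in> mid V B}"
    by blast
  hence mi: "(mono_poly (a + b) :: 'k mpoly) \<in> ideal_gen (poly_ring V) {a * b | a b. a \<in> mid V A \<and> b \<in> mid V B}"
    unfolding mono_poly_add using ideal_gen_sup by (rule subsetD[rotated])
  have "{a * b | a b. a \<in> mid V A \<and> b \<in> mid V B} \<subseteq> (poly_ring V :: 'k mpoly set)"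
    using S mid_sub_ring by blast
  note I = ideal_gen_ideal[OF this]
  have "(mono_poly (c - (a + b)) :: 'k mpoly) \<in> poly_ring V"
    by (rule poly_ring_mono) (rule vexps_minus[OF c])
  from ideal_multL[OF I this mi]
  show "(mono_poly c :: 'k mpoly) \<in> ideal_gen (poly_ring V) {a * b | a b. a \<in> mid V A \<and> b \<in> mid V B}"
    by (subst mono_decomp[OF ab(3)])
qed

fun pw :: "nat set \<Rightarrow> (nat \<Rightarrow>\<^sub>0 nat) set \<Rightarrow> nat \<Rightarrow> (nat \<Rightarrow>\<^sub>0 nat) set" where
  "pw V E 0 = vexps V"
| "pw V E (Suc k) = pset V (pw V E k) E"

lemma vexps_upcl: "upcl V (vexps V)"
  by (simp add: upcl_def)

lemma pw_upcl: "upcl V (pw V E k)"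
  by (cases k) (simp_all add: vexps_upcl pset_upcl)

lemma pow_mid:
  assumes E: "upcl V E"
  shows "ideal_pow (poly_ring V) (mid V E :: ('k::field) mpoly set) k = mid V (pw V E k)"
proof (induction k)
  case 0 thus ?case by (simp add: mid_vexps)
next
  case (Suc k)
  show ?case
    by (simp only: ideal_pow.simps pw.simps Suc) (rule gen_prod[OF pw_upcl E])
qed

lemma sat_upcl:
  assumes E: "upcl V E"
  shows "upcl (V - {j}) (sat V j E)"
  unfolding upcl_def
proof (intro conjI ballI impI)
  show "sat V j E \<subseteq> vexps (V - {j})" by (auto simp: sat_def)
  fix a b assume a: "a \<in> sat V j E" and b: "b \<in> vexps (V - {j})" and d: "mon_dvd a b"
  obtain N where N: "a + Poly_Mapping.single j N \<in> E" using a by (auto simp: sat_def)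
  have "mon_dvd (a + Poly_Mapping.single j N) (b + Poly_Mapping.single j N)"
    using d by (rule mon_dvd_add_mono) simp
  moreover have "b + Poly_Mapping.single j N \<in> vexps V"
  proof (cases "j \<in> V")
    case True thus ?thesis using vexps_plus_single b by blast
  next
    case False
    have "a + Poly_Mapping.single j N \<in> vexps V" using N E by (auto simp: upcl_def)
    hence "N = 0" using False by (auto simp: vexps_def keys_add_nat split: if_splits)
    thus ?thesis using b vexps_mono[of "V - {j}" V] by auto
  qed
  ultimately have "b + Poly_Mapping.single j N \<in> E" using N E by (auto simp: upcl_def)
  thus "b \<in> sat V j E" using b by (auto simp: sat_def)
qed

lemma sat_vexps: "j \<in> V \<Longrightarrow> sat V j (vexps V) = vexps (V - {j})"
proof (intro set_eqI iffI)
  fix c assume "j \<in> V" "c \<in> vexps (V - {j})"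
  hence "c + Poly_Mapping.single j 0 \<in> vexps V" by (rule vexps_plus_single)
  thus "c \<in> sat V j (vexps V)" using \<open>c \<in> vexps (V - {j})\<close> unfolding sat_def by blast
qed (auto simp: sat_def)

lemma er_plus: "er j m + Poly_Mapping.single j (lookup m j) = m"
  by (rule poly_mapping_eqI) (simp add: lookup_add lookup_er lookup_single_if)

lemma er_add: "er j (a + b) = er j a + er j b"
  by (rule poly_mapping_eqI) (simp add: lookup_add lookup_er)

lemma er_id: "c \<in> vexps (V - {j}) \<Longrightarrow> er j c = c"
  by (rule poly_mapping_eqI) (auto simp: lookup_er vexps_def in_keys_iff)

lemma er_single: "er j (c + Poly_Mapping.single j N) = er j c"
  by (rule poly_mapping_eqI) (simp add: lookup_add lookup_er lookup_single_if)

lemma er_single_j: "er j (Poly_Mapping.single j N) = 0"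
  by (rule poly_mapping_eqI) (simp add: lookup_er lookup_single_if)

lemma mon_dvd_er: "mon_dvd a b \<Longrightarrow> mon_dvd (er j a) (er j b)"
  by (simp add: mon_dvd_def lookup_er)

lemma sat_pset:
  assumes j: "j \<in> V" and A: "upcl V A" and B: "upcl V B"
  shows "sat V j (pset V A B) = pset (V - {j}) (sat V j A) (sat V j B)"
proof (intro set_eqI iffI)
  fix c assume "c \<in> sat V j (pset V A B)"
  then obtain N where c: "c \<in> vexps (V - {j})" "c + Poly_Mapping.single j N \<in> pset V A B"
    by (auto simp: sat_def)
  then obtain a b where ab: "a \<in> A" "b \<in> B" "mon_dvd (a + b) (c + Poly_Mapping.single j N)"
    by (auto simp: pset_def)
  have av: "a \<in> vexps V" "b \<in> vexps V" using ab A B by (auto simp: upcl_def)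
  have "er j a + Poly_Mapping.single j (lookup a j) \<in> A" using ab(1) by (simp add: er_plus)
  hence "er j a \<in> sat V j A" using er_vexps[OF av(1), of j] unfolding sat_def by blast
  moreover have "er j b + Poly_Mapping.single j (lookup b j) \<in> B" using ab(2) by (simp add: er_plus)
  hence "er j b \<in> sat V j B" using er_vexps[OF av(2), of j] unfolding sat_def by blast
  moreover have "mon_dvd (er j a + er j b) c"
    using mon_dvd_er[OF ab(3), of j] by (simp add: er_add er_single_j er_id[OF c(1)])
  ultimately show "c \<in> pset (V - {j}) (sat V j A) (sat V j B)" using c(1) by (auto simp: pset_def)
next
  fix c assume "c \<in> pset (V - {j}) (sat V j A) (sat V j B)"
  then obtain a b where c: "c \<in> vexps (V - {j})" and ab: "a \<in> sat V j A" "b \<in> sat V j B" "mon_dvd (a + b) c"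
    by (auto simp: pset_def)
  obtain N1 N2 where N: "a + Poly_Mapping.single j N1 \<in> A" "b + Poly_Mapping.single j N2 \<in> B"
    using ab by (auto simp: sat_def)
  have "mon_dvd ((a + Poly_Mapping.single j N1) + (b + Poly_Mapping.single j N2)) (c + Poly_Mapping.single j (N1 + N2))"
    using ab(3) by (auto simp: mon_dvd_def lookup_add lookup_single_if)
  moreover have "c + Poly_Mapping.single j (N1 + N2) \<in> vexps V" using vexps_plus_single[OF j c] .
  ultimately have "c + Poly_Mapping.single j (N1 + N2) \<in> pset V A B" using N by (auto simp: pset_def)
  thus "c \<in> sat V j (pset V A B)" using c by (auto simp: sat_def)
qed

lemma sat_pw:
  assumes j: "j \<in> V" and E: "upcl V E"
  shows "pw (V - {j}) (sat V j E) k = sat V j (pw V E k)"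
proof (induction k)
  case 0 thus ?case by (simp add: sat_vexps[OF j])
next
  case (Suc k) thus ?case by (simp add: sat_pset[OF j pw_upcl E])
qed



lemma mult_mono_expand:
  "g * (mono_poly a :: ('k::field) mpoly) = (\<Sum>c\<in>keys g. Poly_Mapping.single (c + a) (lookup g c))"
proof -
  have "g * (mono_poly a :: 'k mpoly) = (\<Sum>c\<in>keys g. Poly_Mapping.single c (lookup g c)) * mono_poly a"
    by (subst poly_expand[of g]) (rule refl)
  also have "\<dots> = (\<Sum>c\<in>keys g. Poly_Mapping.single c (lookup g c) * mono_poly a)"
    by (rule sum_distrib_right)
  also have "\<dots> = (\<Sum>c\<in>keys g. Poly_Mapping.single (c + a) (lookup g c))"
    by (rule sum.cong[OF refl]) (simp add: mono_poly_def mult_single)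
  finally show ?thesis .
qed

lemma lookup_mult_mono:
  "lookup (g * (mono_poly a :: ('k::field) mpoly)) (b + a) = lookup g b"
proof -
  have "lookup (g * (mono_poly a :: 'k mpoly)) (b + a) = (\<Sum>c\<in>keys g. if c = b then lookup g c else 0)"
    unfolding mult_mono_expand lookup_sum
    by (rule sum.cong[OF refl]) (auto simp: lookup_single_if)
  also have "\<dots> = lookup g b"
    by (simp add: sum.delta) (metis not_in_keys_iff_lookup_eq_zero)
  finally show ?thesis .
qed

lemma keys_mult_mono:
  "keys (g * (mono_poly a :: ('k::field) mpoly)) = (\<lambda>b. b + a) ` keys g"
proof (intro set_eqI iffI)
  fix x assume "x \<in> keys (g * (mono_poly a :: 'k mpoly))"
  then obtain y z where "x = y + z" "y \<in> keys g" "z \<in> keys (mono_poly a :: 'k mpoly)"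
    using keys_mult by blast
  thus "x \<in> (\<lambda>b. b + a) ` keys g" by simp
next
  fix x assume "x \<in> (\<lambda>b. b + a) ` keys g"
  then obtain b where "x = b + a" "b \<in> keys g" by blast
  thus "x \<in> keys (g * (mono_poly a :: 'k mpoly))"
    by (simp add: in_keys_iff lookup_mult_mono)
qed

definition cl :: "nat set \<Rightarrow> (nat \<Rightarrow>\<^sub>0 nat) set \<Rightarrow> (nat \<Rightarrow>\<^sub>0 nat) \<Rightarrow> (nat \<Rightarrow>\<^sub>0 nat) set" where
  "cl V E a = {c \<in> vexps V. a + c \<in> E}"

lemma cl_upcl:
  assumes E: "upcl V E" shows "upcl V (cl V E a)"
  unfolding upcl_def
proof (intro conjI ballI impI)
  show "cl V E a \<subseteq> vexps V" by (auto simp: cl_def)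
  fix x b assume x: "x \<in> cl V E a" and b: "b \<in> vexps V" and d: "mon_dvd x b"
  have "a + x \<in> E" using x by (simp add: cl_def)
  hence "a + x \<in> vexps V" using E by (auto simp: upcl_def)
  hence "a \<in> vexps V" by simp
  hence "a + b \<in> vexps V" using b by simp
  moreover have "mon_dvd (a + x) (a + b)" using d by (rule mon_dvd_add_mono[OF mon_dvd_refl])
  ultimately have "a + b \<in> E" using \<open>a + x \<in> E\<close> E by (auto simp: upcl_def)
  thus "b \<in> cl V E a" using b by (simp add: cl_def)
qed

lemma ann_mono:
  assumes E: "upcl V E"
  shows "{g \<in> poly_ring V. g * mono_poly a \<in> mid V E} = (mid V (cl V E a) :: ('k::field) mpoly set)"
proof (intro set_eqI iffI)
  fix g :: "'k mpoly" assume g: "g \<in> {g \<in> poly_ring V. g * mono_poly a \<in> mid V E}"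
  have "keys g \<subseteq> cl V E a"
  proof
    fix b assume b: "b \<in> keys g"
    have "b + a \<in> keys (g * mono_poly a)" using b by (simp add: keys_mult_mono)
    hence "b + a \<in> E" using g by (auto simp: mid_def)
    moreover have "b \<in> vexps V" using g b by (auto simp: poly_ring_iff)
    ultimately show "b \<in> cl V E a" by (simp add: cl_def add.commute)
  qed
  thus "g \<in> mid V (cl V E a)" using g by (simp add: mid_def)
next
  fix g :: "'k mpoly" assume g: "g \<in> mid V (cl V E a)"
  hence gr: "g \<in> poly_ring V" by (simp add: mid_def)
  have "keys (g * mono_poly a) \<subseteq> E"
    using g by (auto simp: keys_mult_mono mid_def cl_def add.commute)
  moreover have "g * mono_poly a \<in> poly_ring V"
  proof -
    have "keys (g * mono_poly a) \<subseteq> E" by fact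
    thus ?thesis using E by (auto simp: poly_ring_iff upcl_def)
  qed
  ultimately show "g \<in> {g \<in> poly_ring V. g * mono_poly a \<in> mid V E}" using gr by (simp add: mid_def)
qed

definition restr :: "(nat \<Rightarrow>\<^sub>0 nat) set \<Rightarrow> ('k::field) mpoly \<Rightarrow> 'k mpoly" where
  "restr Q p = (\<Sum>c\<in>keys p \<inter> Q. Poly_Mapping.single c (lookup p c))"

lemma lookup_restr: "lookup (restr Q p) c = (if c \<in> Q then lookup p c else 0)"
proof -
  have "lookup (restr Q p) c = (\<Sum>x\<in>keys p \<inter> Q. if x = c then lookup p x else 0)"
    unfolding restr_def lookup_sum by (rule sum.cong[OF refl]) (auto simp: lookup_single_if)
  also have "\<dots> = (if c \<in> Q then lookup p c else 0)"
    by (simp add: sum.delta) (metis not_in_keys_iff_lookup_eq_zero)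
  finally show ?thesis .
qed

lemma keys_restr: "keys (restr Q p) = keys p \<inter> Q"
  by (auto simp: in_keys_iff lookup_restr split: if_splits)

lemma restr_split: "p = restr Q p + restr (- Q) p"
  by (rule poly_mapping_eqI) (simp add: lookup_add lookup_restr)

lemma restr_ring: "p \<in> poly_ring V \<Longrightarrow> restr Q p \<in> poly_ring V"
  by (auto simp: poly_ring_iff keys_restr)

definition PS :: "nat set \<Rightarrow> nat set \<Rightarrow> (nat \<Rightarrow>\<^sub>0 nat) set" where
  "PS V S = {c \<in> vexps V. \<exists>i\<in>S. 0 < lookup c i}"

lemma PS_upcl: "upcl V (PS V S)"
  unfolding upcl_def PS_def mon_dvd_def by (auto intro: less_le_trans)

lemma prime_PS:
  assumes S: "S \<subseteq> V"
  shows "prime_ideal_in (poly_ring V) (mid V (PS V S) :: ('k::field) mpoly set)"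
  unfolding prime_ideal_in_def
proof (intro conjI ballI impI)
  let ?Q = "PS V S"
  let ?P = "mid V ?Q :: 'k mpoly set"
  have I: "is_ideal_in (poly_ring V) ?P" by (rule mid_ideal[OF PS_upcl])
  thus "is_ideal_in (poly_ring V) ?P" .
  have "(1 :: 'k mpoly) \<notin> ?P" by (simp add: mid_def PS_def)
  thus "?P \<noteq> poly_ring V" using poly_ring_one by blast
  fix a b :: "'k mpoly" assume a: "a \<in> poly_ring V" and b: "b \<in> poly_ring V" and ab: "a * b \<in> ?P"
  show "a \<in> ?P \<or> b \<in> ?P"
  proof (rule ccontr)
    assume "\<not> (a \<in> ?P \<or> b \<in> ?P)"
    hence na: "a \<notin> ?P" and nb: "b \<notin> ?P" by auto
    define a1 where "a1 = restr ?Q a"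
    define a0 where "a0 = restr (- ?Q) a"
    define b1 where "b1 = restr ?Q b"
    define b0 where "b0 = restr (- ?Q) b"
    have a1: "a1 \<in> ?P" using a by (simp add: a1_def mid_def restr_ring keys_restr)
    have b1: "b1 \<in> ?P" using b by (simp add: b1_def mid_def restr_ring keys_restr)
    have a0r: "a0 \<in> poly_ring V" using a by (simp add: a0_def restr_ring)
    have ea: "a = a1 + a0" unfolding a1_def a0_def by (rule restr_split)
    have eb: "b = b1 + b0" unfolding b1_def b0_def by (rule restr_split)
    have "a0 * b0 = a * b - a1 * b - a0 * b1"
      unfolding ea eb by (simp add: algebra_simps)
    also have "\<dots> \<in> ?P"
      using I ab a1 b1 a0r b
      by (intro ideal_diff[OF I]) (auto intro: ideal_multR ideal_multL)
    finally have "a0 * b0 \<in> ?P" .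
    hence k1: "keys (a0 * b0) \<subseteq> ?Q" by (simp add: mid_def)
    have k2: "keys (a0 * b0) \<inter> ?Q = {}"
    proof (rule ccontr)
      assume "keys (a0 * b0) \<inter> ?Q \<noteq> {}"
      then obtain x where x: "x \<in> keys (a0 * b0)" "x \<in> ?Q" by blast
      then obtain y z where yz: "x = y + z" "y \<in> keys a0" "z \<in> keys b0" using keys_mult by blast
      have "y \<notin> ?Q" "z \<notin> ?Q" using yz by (auto simp: a0_def b0_def keys_restr)
      moreover have "y \<in> vexps V" "z \<in> vexps V" using yz a b
        by (auto simp: a0_def b0_def keys_restr poly_ring_iff)
      ultimately have "\<forall>i\<in>S. lookup y i = 0 \<and> lookup z i = 0" by (auto simp: PS_def)
      hence "x \<notin> ?Q" using yz(1) by (auto simp: PS_def lookup_add)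
      thus False using x by blast
    qed
    from k1 k2 have "keys (a0 * b0) = {}" by blast
    hence "a0 * b0 = 0" by simp
    hence "a0 = 0 \<or> b0 = 0" by simp
    moreover have "a0 \<noteq> 0"
    proof
      assume "a0 = 0"
      hence "a = a1" using ea by simp
      thus False using a1 na by simp
    qed
    moreover have "b0 \<noteq> 0"
    proof
      assume "b0 = 0"
      hence "b = b1" using eb by simp
      thus False using b1 nb by simp
    qed
    ultimately show False by blast
  qed
qed

lemma prime_ne: fixes P :: "('k::field) mpoly set" shows "prime_ideal_in (poly_ring V) P \<Longrightarrow> 1 \<notin> P"
proof
  assume P: "prime_ideal_in (poly_ring V) P" and one: "1 \<in> P"
  have "P = poly_ring V"
  proof
    show "P \<subseteq> poly_ring V" using P by (auto simp: prime_ideal_in_def is_ideal_in_def)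
    show "poly_ring V \<subseteq> P"
    proof
      fix r :: "'k mpoly" assume "r \<in> poly_ring V"
      moreover have "is_ideal_in (poly_ring V) P" using P by (simp add: prime_ideal_in_def)
      ultimately have "r * 1 \<in> P" using one ideal_multL by blast
      thus "r \<in> P" by simp
    qed
  qed
  thus False using P by (simp add: prime_ideal_in_def)
qed

lemma prime_mono_PS:
  fixes dummy :: "'k::field"
  assumes V: "finite V" and F: "upcl V F"
    and P: "prime_ideal_in (poly_ring V) (mid V F :: 'k mpoly set)"
  shows "F = PS V {i \<in> V. Poly_Mapping.single i 1 \<in> F}"
proof (intro set_eqI iffI)
  let ?S = "{i \<in> V. Poly_Mapping.single i 1 \<in> F}"
  fix c assume "c \<in> PS V ?S"
  then obtain i where c: "c \<in> vexps V" "i \<in> ?S" "0 < lookup c i" by (auto simp: PS_def)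
  have "mon_dvd (Poly_Mapping.single i 1) c" using c(3) by (auto simp: mon_dvd_def lookup_single_if)
  thus "c \<in> F" using c F by (auto simp: upcl_def)
next
  let ?S = "{i \<in> V. Poly_Mapping.single i 1 \<in> F}"
  have Fv: "F \<subseteq> vexps V" using F by (simp add: upcl_def)
  have pr: "\<And>x y. x \<in> poly_ring V \<Longrightarrow> y \<in> poly_ring V \<Longrightarrow> x * y \<in> (mid V F :: 'k mpoly set) \<Longrightarrow>
      x \<in> mid V F \<or> y \<in> mid V F"
    using P by (simp add: prime_ideal_in_def)
  have main: "\<forall>c. c \<in> F \<and> deg V c = n \<longrightarrow> (\<exists>i\<in>?S. 0 < lookup c i)" for n
  proof (induction n rule: less_induct)
    case (less n)
    show ?case
    proof (intro allI impI)
      fix c assume cn: "c \<in> F \<and> deg V c = n"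
      have cv: "c \<in> vexps V" using cn Fv by blast
      have "c \<noteq> 0"
      proof
        assume "c = 0"
        hence "(mono_poly 0 :: 'k mpoly) \<in> mid V F" using cn by (simp add: mono_in_mid)
        thus False using prime_ne[OF P] by (simp add: mono_poly_zero)
      qed
      then obtain i where i: "0 < lookup c i" by (metis keys_eq_empty ex_in_conv in_keys_iff neq0_conv)
      hence iV: "i \<in> V" using cv by (auto simp: vexps_def in_keys_iff)
      define c' where "c' = c - Poly_Mapping.single i 1"
      have dv: "mon_dvd (Poly_Mapping.single i 1) c" using i by (auto simp: mon_dvd_def lookup_single_if)
      have cc: "c = Poly_Mapping.single i 1 + c'" unfolding c'_def by (rule mon_dvd_decomp[OF dv])
      have c'v: "c' \<in> vexps V" unfolding c'_def by (rule vexps_minus[OF cv])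
      have siv: "Poly_Mapping.single i 1 \<in> vexps V" using iV by (simp add: vexps_def)
      have "(mono_poly (Poly_Mapping.single i 1) * mono_poly c' :: 'k mpoly) \<in> mid V F"
        using cn cv cc by (metis mono_in_mid mono_poly_add)
      hence "(mono_poly (Poly_Mapping.single i 1) :: 'k mpoly) \<in> mid V F \<or> (mono_poly c' :: 'k mpoly) \<in> mid V F"
        using pr poly_ring_mono siv c'v by blast
      thus "\<exists>i\<in>?S. 0 < lookup c i"
      proof
        assume "(mono_poly (Poly_Mapping.single i 1) :: 'k mpoly) \<in> mid V F"
        hence "i \<in> ?S" using iV by (simp add: mono_in_mid)
        thus ?thesis using i by blast
      next
        assume "(mono_poly c' :: 'k mpoly) \<in> mid V F"
        hence c'F: "c' \<in> F" by (simp add: mono_in_mid)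
        have "mon_dvd c' c" using cc by (metis mon_dvd_add_right add.commute)
        moreover have "c' \<noteq> c"
        proof
          assume "c' = c"
          hence "lookup c i = 1 + lookup c i" using cc by (metis lookup_add lookup_single_eq)
          thus False by simp
        qed
        ultimately have "deg V c' < n" using deg_less[OF V cv] cn by blast
        then obtain k where "k \<in> ?S" "0 < lookup c' k" using less c'F by blast
        moreover have "lookup c' k \<le> lookup c k" using \<open>mon_dvd c' c\<close> by (simp add: mon_dvd_def)
        ultimately show ?thesis by auto
      qed
    qed
  qed
  fix c assume "c \<in> F"
  hence "c \<in> vexps V" "\<exists>i\<in>?S. 0 < lookup c i" using Fv main[of "deg V c"] by blast+
  thus "c \<in> PS V ?S" by (simp add: PS_def)
qed



lemma lookup_mult_zero:
  assumes "\<And>x y. x \<in> keys p \<Longrightarrow> y \<in> keys q \<Longrightarrow> x + y \<noteq> k"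
  shows "lookup (p * q :: ('k::field) mpoly) k = 0"
proof -
  have "k \<notin> keys (p * q)"
  proof
    assume "k \<in> keys (p * q)"
    then obtain x y where "k = x + y" "x \<in> keys p" "y \<in> keys q" using keys_mult by blast
    thus False using assms by blast
  qed
  thus ?thesis by (simp add: in_keys_iff)
qed

lemma lowest_term:
  fixes g h :: "('k::field) mpoly"
  assumes g: "g \<noteq> 0" and h: "h \<noteq> 0"
  shows "lookup (g * h) (Min (keys g) + Min (keys h)) = lookup g (Min (keys g)) * lookup h (Min (keys h))"
proof -
  define m where "m = Min (keys g)"
  define n where "n = Min (keys h)"
  have mk: "m \<in> keys g" using g by (simp add: m_def)
  have nk: "n \<in> keys h" using h by (simp add: n_def)
  have mle: "\<And>x. x \<in> keys g \<Longrightarrow> m \<le> x" by (simp add: m_def)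
  have nle: "\<And>x. x \<in> keys h \<Longrightarrow> n \<le> x" by (simp add: n_def)
  define t where "t = Poly_Mapping.single m (lookup g m)"
  define s where "s = Poly_Mapping.single n (lookup h n)"
  define g' where "g' = g - t"
  define h' where "h' = h - s"
  have kg': "\<And>x. x \<in> keys g' \<Longrightarrow> m < x"
  proof -
    fix x assume x: "x \<in> keys g'"
    hence "x \<noteq> m" by (auto simp: g'_def t_def in_keys_iff lookup_minus lookup_single_if)
    moreover have "x \<in> keys g" using x by (auto simp: g'_def t_def in_keys_iff lookup_minus lookup_single_if split: if_splits)
    ultimately show "m < x" using mle by force
  qed
  have kh': "\<And>x. x \<in> keys h' \<Longrightarrow> n < x"
  proof -
    fix x assume x: "x \<in> keys h'"
    hence "x \<noteq> n" by (auto simp: h'_def s_def in_keys_iff lookup_minus lookup_single_if)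
    moreover have "x \<in> keys h" using x by (auto simp: h'_def s_def in_keys_iff lookup_minus lookup_single_if split: if_splits)
    ultimately show "n < x" using nle by force
  qed
  have kt: "\<And>x. x \<in> keys t \<Longrightarrow> x = m" by (simp add: t_def split: if_splits)
  have ks: "\<And>x. x \<in> keys s \<Longrightarrow> x = n" by (simp add: s_def split: if_splits)
  have "g * h = t * s + t * h' + g' * s + g' * h'"
    by (simp add: g'_def h'_def algebra_simps)
  hence "lookup (g * h) (m + n) = lookup (t * s) (m + n) + lookup (t * h') (m + n) + lookup (g' * s) (m + n) + lookup (g' * h') (m + n)"
    by (simp add: lookup_add)
  also have "lookup (t * h') (m + n) = 0"
    by (rule lookup_mult_zero) (metis kt kh' add_less_cancel_left order_less_irrefl)
  also have "lookup (g' * s) (m + n) = 0"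
    by (rule lookup_mult_zero) (metis ks kg' add_less_cancel_right order_less_irrefl)
  also have "lookup (g' * h') (m + n) = 0"
    by (rule lookup_mult_zero) (metis kg' kh' add_strict_mono order_less_irrefl)
  also have "lookup (t * s) (m + n) = lookup g m * lookup h n"
    by (simp add: t_def s_def mult_single)
  finally show ?thesis by (simp add: m_def n_def)
qed



lemma card_keys_mult_mono: "card (keys (mono_poly a * h :: ('k::field) mpoly)) = card (keys h)"
proof -
  have "keys (mono_poly a * h :: 'k mpoly) = (\<lambda>b. b + a) ` keys h"
    by (simp add: mult.commute keys_mult_mono)
  moreover have "inj_on (\<lambda>b. b + a) (keys h)" by (rule inj_onI) simp
  ultimately show ?thesis by (simp add: card_image)
qed

lemma pow_kill:
  fixes g :: "('k::field) mpoly"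
  assumes E: "upcl V E" and g: "g \<in> poly_ring V" "g \<noteq> 0"
  shows "\<forall>h. h \<in> poly_ring V \<and> card (keys h - E) \<le> n \<and> g * h \<in> mid V E
           \<longrightarrow> mono_poly (Min (keys g)) ^ n * h \<in> mid V E"
proof (induction n)
  let ?m = "Min (keys g)"
  let ?X = "mono_poly ?m :: 'k mpoly"
  let ?L = "mid V E :: 'k mpoly set"
  have IL: "is_ideal_in (poly_ring V) ?L" by (rule mid_ideal[OF E])
  have mk: "?m \<in> keys g" using g(2) by simp
  hence mv: "?m \<in> vexps V" using g(1) by (auto simp: poly_ring_iff)
  have XR: "?X \<in> poly_ring V" by (rule poly_ring_mono[OF mv])
  have XnR: "\<And>k. ?X ^ k \<in> poly_ring V" by (rule poly_ring_power[OF XR])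
  {
    fix h :: "'k mpoly" assume hR: "h \<in> poly_ring V" and gh: "g * h \<in> ?L"
    define h1 where "h1 = restr E h"
    define h0 where "h0 = restr (- E) h"
    have h1L: "h1 \<in> ?L" using hR by (simp add: h1_def mid_def restr_ring keys_restr)
    have hsplit: "h = h1 + h0" unfolding h1_def h0_def by (rule restr_split)
    have h0R: "h0 \<in> poly_ring V" using hR by (simp add: h0_def restr_ring)
    have kh0: "keys h0 = keys h - E" by (auto simp: h0_def keys_restr)
    have "g * h0 = g * h - g * h1" using hsplit by (simp add: algebra_simps)
    also have "\<dots> \<in> ?L" using gh ideal_multL[OF IL g(1) h1L] by (rule ideal_diff[OF IL])
    finally have gh0: "g * h0 \<in> ?L" .
    note h1L hsplit h0R kh0 gh0
  } note split = this
  case 0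
  show ?case
  proof (intro allI impI)
    fix h :: "'k mpoly" assume H: "h \<in> poly_ring V \<and> card (keys h - E) \<le> 0 \<and> g * h \<in> ?L"
    hence "keys h - E = {}" by simp
    hence "keys (restr (- E) h) = {}" by (auto simp: keys_restr)
    hence "h = restr E h" using restr_split[of h E] by simp
    hence "h \<in> ?L" using split(1)[of h] H by simp
    thus "?X ^ 0 * h \<in> ?L" by simp
  qed
next
  let ?m = "Min (keys g)"
  let ?X = "mono_poly ?m :: 'k mpoly"
  let ?L = "mid V E :: 'k mpoly set"
  have IL: "is_ideal_in (poly_ring V) ?L" by (rule mid_ideal[OF E])
  have mk: "?m \<in> keys g" using g(2) by simp
  hence mv: "?m \<in> vexps V" using g(1) by (auto simp: poly_ring_iff)
  have XR: "?X \<in> poly_ring V" by (rule poly_ring_mono[OF mv])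
  have XnR: "\<And>k. ?X ^ k \<in> poly_ring V" by (rule poly_ring_power[OF XR])
  case (Suc n)
  show ?case
  proof (intro allI impI)
    fix h :: "'k mpoly" assume H: "h \<in> poly_ring V \<and> card (keys h - E) \<le> Suc n \<and> g * h \<in> ?L"
    hence hR: "h \<in> poly_ring V" and hc: "card (keys h - E) \<le> Suc n" and gh: "g * h \<in> ?L" by auto
    define h1 where "h1 = restr E h"
    define h0 where "h0 = restr (- E) h"
    have h1L: "h1 \<in> ?L" using hR by (simp add: h1_def mid_def restr_ring keys_restr)
    have hsplit: "h = h1 + h0" unfolding h1_def h0_def by (rule restr_split)
    have h0R: "h0 \<in> poly_ring V" using hR by (simp add: h0_def restr_ring)
    have kh0: "keys h0 = keys h - E" by (auto simp: h0_def keys_restr)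
    have "g * h0 = g * h - g * h1" using hsplit by (simp add: algebra_simps)
    also have "\<dots> \<in> ?L" using gh ideal_multL[OF IL g(1) h1L] by (rule ideal_diff[OF IL])
    finally have gh0: "g * h0 \<in> ?L" .
    have part1: "?X ^ Suc n * h1 \<in> ?L" by (rule ideal_multL[OF IL XnR h1L])
    show "?X ^ Suc n * h \<in> ?L"
    proof (cases "h0 = 0")
      case True
      thus ?thesis using hsplit part1 by simp
    next
      case False
      define a where "a = Min (keys h0)"
      define c where "c = lookup h0 a"
      have ak: "a \<in> keys h0" using False by (simp add: a_def)
      hence c0: "c \<noteq> 0" by (simp add: c_def in_keys_iff)
      have "lookup (g * h0) (?m + a) = lookup g ?m * c"
        unfolding a_def c_def by (rule lowest_term[OF g(2) False])
      moreover have "lookup g ?m \<noteq> 0" using mk by (simp add: in_keys_iff)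
      ultimately have "?m + a \<in> keys (g * h0)" using c0 by (simp add: in_keys_iff)
      hence maE: "?m + a \<in> E" using gh0 by (auto simp: mid_def)
      define t where "t = Poly_Mapping.single a c"
      define h' where "h' = h0 - t"
      define hs where "hs = ?X * h'"
      have Xt: "?X * t = Poly_Mapping.single (?m + a) c" by (simp add: t_def mono_poly_def mult_single)
      have XtL: "?X * t \<in> ?L"
      proof -
        have "?m + a \<in> vexps V" using maE E by (auto simp: upcl_def)
        thus ?thesis unfolding Xt using maE c0 by (simp add: mid_def poly_ring_iff)
      qed
      have tR: "t \<in> poly_ring V" using ak h0R by (auto simp: t_def poly_ring_iff)
      have h'R: "h' \<in> poly_ring V" unfolding h'_def by (rule poly_ring_diff[OF h0R tR])
      have hsR: "hs \<in> poly_ring V" unfolding hs_def by (rule poly_ring_mult[OF XR h'R])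
      have kh': "keys h' = keys h0 - {a}"
        by (auto simp: h'_def t_def c_def in_keys_iff lookup_minus lookup_single_if split: if_splits)
      have "card (keys hs - E) \<le> card (keys hs)" by (rule card_mono) auto
      also have "\<dots> = card (keys h')" unfolding hs_def by (rule card_keys_mult_mono)
      also have "\<dots> = card (keys h0) - 1" using ak by (simp add: kh')
      also have "\<dots> \<le> n" using hc kh0 by simp
      finally have hsc: "card (keys hs - E) \<le> n" .
      have "g * hs = ?X * (g * h0) - g * (?X * t)"
        by (simp add: hs_def h'_def algebra_simps)
      also have "\<dots> \<in> ?L"
        by (rule ideal_diff[OF IL]) (rule ideal_multL[OF IL XR gh0], rule ideal_multL[OF IL g(1) XtL])
      finally have ghs: "g * hs \<in> ?L" .
      have IH: "?X ^ n * hs \<in> ?L" using Suc hsR hsc ghs by blast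
      have "?X ^ Suc n * h = ?X ^ Suc n * h1 + (?X ^ n * hs + ?X ^ n * (?X * t))"
        by (simp add: hsplit hs_def h'_def algebra_simps)
      also have "\<dots> \<in> ?L"
        by (intro ideal_add[OF IL] part1 IH ideal_multL[OF IL XnR XtL])
      finally show ?thesis .
    qed
  qed
qed



lemma prime_pow:
  fixes P :: "('k::field) mpoly set"
  assumes P: "prime_ideal_in (poly_ring V) P" and x: "x \<in> poly_ring V"
  shows "x ^ n \<in> P \<Longrightarrow> x \<in> P"
proof (induction n)
  case 0 thus ?case using prime_ne[OF P] by simp
next
  case (Suc n)
  have "x * x ^ n \<in> P" using Suc.prems by simp
  hence "x \<in> P \<or> x ^ n \<in> P" using P x poly_ring_power[OF x] by (simp add: prime_ideal_in_def)
  thus ?case using Suc.IH by blast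
qed

lemma prime_ideal: "prime_ideal_in R P \<Longrightarrow> is_ideal_in R P"
  by (simp add: prime_ideal_in_def)

lemma claimC:
  fixes P :: "('k::field) mpoly set"
  assumes E: "upcl V E" and P: "prime_ideal_in (poly_ring V) P"
    and f: "f \<in> poly_ring V" and Pf: "P = {g \<in> poly_ring V. g * f \<in> mid V E}"
  shows "\<forall>g. g \<in> P \<and> card (keys g) = n \<longrightarrow> (\<forall>c\<in>keys g. mono_poly c \<in> P)"
proof (induction n rule: less_induct)
  case (less n)
  have IP: "is_ideal_in (poly_ring V) P" by (rule prime_ideal[OF P])
  show ?case
  proof (intro allI impI ballI)
    fix g c assume gn: "g \<in> P \<and> card (keys g) = n" and c: "c \<in> keys g"
    have gR: "g \<in> poly_ring V" using gn Pf by blast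
    have gf: "g * f \<in> mid V E" using gn Pf by blast
    have g0: "g \<noteq> 0" using c by auto
    let ?m = "Min (keys g)"
    have mk: "?m \<in> keys g" using g0 by simp
    hence mv: "?m \<in> vexps V" using gR by (auto simp: poly_ring_iff)
    have XR: "(mono_poly ?m :: 'k mpoly) \<in> poly_ring V" by (rule poly_ring_mono[OF mv])
    have "mono_poly ?m ^ card (keys f - E) * f \<in> mid V E"
      using pow_kill[OF E gR g0, of "card (keys f - E)"] f gf by blast
    hence "mono_poly ?m ^ card (keys f - E) \<in> P" using Pf poly_ring_power[OF XR] by blast
    hence Xm: "(mono_poly ?m :: 'k mpoly) \<in> P" by (rule prime_pow[OF P XR])
    define g' where "g' = g - Poly_Mapping.single 0 (lookup g ?m) * mono_poly ?m"
    have "Poly_Mapping.single 0 (lookup g ?m) * mono_poly ?m \<in> P"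
      by (rule ideal_multL[OF IP poly_ring_const Xm])
    hence g'P: "g' \<in> P" unfolding g'_def using gn by (intro ideal_diff[OF IP]) auto
    have kg': "keys g' = keys g - {?m}"
      by (auto simp: g'_def mono_poly_def mult_single in_keys_iff lookup_minus lookup_single_if split: if_splits)
    have "card (keys g) > 0" using mk by (auto simp: card_gt_0_iff)
    hence "card (keys g') < n" using gn mk by (simp add: kg')
    hence IH: "\<forall>c\<in>keys g'. mono_poly c \<in> P" using less g'P by blast
    show "mono_poly c \<in> P"
    proof (cases "c = ?m")
      case True thus ?thesis using Xm by simp
    next
      case False thus ?thesis using IH c kg' by blast
    qed
  qed
qed

lemma ideal_contains_mid_keys:
  fixes J :: "('k::field) mpoly set"
  assumes J: "is_ideal_in (poly_ring V) J" and g: "g \<in> poly_ring V"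
    and M: "\<And>c. c \<in> keys g \<Longrightarrow> mono_poly c \<in> J"
  shows "g \<in> J"
proof -
  have "g \<in> mid V (keys g)" using g by (simp add: mid_def)
  thus ?thesis using mid_sub_ideal[OF J M] by blast
qed

lemma lemma_H:
  fixes P :: "('k::field) mpoly set"
  assumes E: "upcl V E" and P: "prime_ideal_in (poly_ring V) P"
    and f: "f \<in> poly_ring V" and Pf: "P = {g \<in> poly_ring V. g * f \<in> mid V E}"
  shows "\<exists>a\<in>vexps V. P = {g \<in> poly_ring V. g * mono_poly a \<in> mid V E}"
proof -
  let ?L = "mid V E :: 'k mpoly set"
  have IL: "is_ideal_in (poly_ring V) ?L" by (rule mid_ideal[OF E])
  have IP: "is_ideal_in (poly_ring V) P" by (rule prime_ideal[OF P])
  have C: "mono_poly c \<in> P" if "g \<in> P" "c \<in> keys g" for g c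
  proof -
    have "\<forall>g'. g' \<in> P \<and> card (keys g') = card (keys g) \<longrightarrow> (\<forall>c\<in>keys g'. mono_poly c \<in> P)"
      by (rule claimC[OF E P f Pf])
    thus ?thesis using that by blast
  qed
  define f1 where "f1 = restr E f"
  define f0 where "f0 = restr (- E) f"
  have f1L: "f1 \<in> ?L" using f by (simp add: f1_def mid_def restr_ring keys_restr)
  have fsplit: "f = f1 + f0" unfolding f1_def f0_def by (rule restr_split)
  have kf0: "keys f0 = keys f - E" by (auto simp: f0_def keys_restr)
  have f0v: "keys f0 \<subseteq> vexps V" using f kf0 by (auto simp: poly_ring_iff)
  define Q where "Q = (\<lambda>a. {g \<in> poly_ring V. g * mono_poly a \<in> ?L})"
  have PQ: "P \<subseteq> Q a" if a: "a \<in> keys f0" for a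
  proof
    fix g assume gP: "g \<in> P"
    have gR: "g \<in> poly_ring V" using gP Pf by blast
    have "keys (g * mono_poly a) \<subseteq> E"
    proof
      fix x assume "x \<in> keys (g * mono_poly a)"
      then obtain c where x: "x = c + a" "c \<in> keys g" by (auto simp: keys_mult_mono)
      have "mono_poly c \<in> P" by (rule C[OF gP x(2)])
      hence "mono_poly c * f \<in> ?L" using Pf by blast
      hence "keys (f * mono_poly c) \<subseteq> E" by (simp add: mid_def mult.commute)
      moreover have "a \<in> keys f" using a kf0 by blast
      ultimately have "a + c \<in> E" by (auto simp: keys_mult_mono)
      thus "x \<in> E" using x by (simp add: add.commute)
    qed
    moreover have "g * mono_poly a \<in> poly_ring V"
    proof -
      have "a \<in> vexps V" using f0v a by blast
      thus ?thesis by (rule poly_ring_mult[OF gR poly_ring_mono])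
    qed
    ultimately show "g \<in> Q a" using gR by (simp add: Q_def mid_def)
  qed
  have QP: "g \<in> P" if gR: "g \<in> poly_ring V" and gQ: "\<forall>a\<in>keys f0. g \<in> Q a" for g
  proof -
    have "f0 = (\<Sum>c\<in>keys f0. Poly_Mapping.single c (lookup f0 c))" by (rule poly_expand)
    also have "\<dots> = (\<Sum>c\<in>keys f0. Poly_Mapping.single 0 (lookup f0 c) * mono_poly c)"
      by (rule sum.cong[OF refl]) (rule single_as_mono)
    finally have e: "f0 = (\<Sum>c\<in>keys f0. Poly_Mapping.single 0 (lookup f0 c) * mono_poly c)" .
    have "g * f0 = g * (\<Sum>c\<in>keys f0. Poly_Mapping.single 0 (lookup f0 c) * mono_poly c)"
      using e by (rule arg_cong[where f="\<lambda>x. g * x"])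
    also have "\<dots> = (\<Sum>c\<in>keys f0. g * (Poly_Mapping.single 0 (lookup f0 c) * mono_poly c))"
      by (rule sum_distrib_left)
    also have "\<dots> = (\<Sum>c\<in>keys f0. Poly_Mapping.single 0 (lookup f0 c) * (g * mono_poly c))"
      by (rule sum.cong[OF refl]) (simp add: mult.left_commute)
    also have "\<dots> \<in> ?L"
    proof (rule ideal_sum[OF IL])
      fix c assume "c \<in> keys f0"
      hence "g * mono_poly c \<in> ?L" using gQ by (simp add: Q_def)
      thus "Poly_Mapping.single 0 (lookup f0 c) * (g * mono_poly c) \<in> ?L"
        by (rule ideal_multL[OF IL poly_ring_const])
    qed
    finally have "g * f0 \<in> ?L" .
    moreover have "g * f1 \<in> ?L" by (rule ideal_multL[OF IL gR f1L])
    ultimately have "g * f \<in> ?L" using fsplit ideal_add[OF IL] by (simp add: distrib_left)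
    thus "g \<in> P" using Pf gR by blast
  qed
  have f0ne: "keys f0 \<noteq> {}"
  proof
    assume "keys f0 = {}"
    hence "f = f1" using fsplit by simp
    hence "1 * f \<in> ?L" using f1L by simp
    hence "1 \<in> P" using Pf by simp
    thus False using prime_ne[OF P] by blast
  qed
  have "\<exists>a\<in>keys f0. Q a \<subseteq> P"
  proof (rule ccontr)
    assume "\<not> (\<exists>a\<in>keys f0. Q a \<subseteq> P)"
    hence nQ: "\<forall>a\<in>keys f0. \<exists>g\<in>Q a. g \<notin> P" by blast
    have mon: "\<exists>c\<in>vexps V. a + c \<in> E \<and> mono_poly c \<notin> P" if a: "a \<in> keys f0" for a
    proof -
      obtain g where g: "g \<in> Q a" "g \<notin> P" using nQ a by blast
      have gR: "g \<in> poly_ring V" using g by (simp add: Q_def)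
      obtain c where c: "c \<in> keys g" "mono_poly c \<notin> P"
        using ideal_contains_mid_keys[OF IP gR] g(2) by blast
      have "g \<in> {g \<in> poly_ring V. g * mono_poly a \<in> ?L}" using g(1) by (simp add: Q_def)
      hence "g \<in> mid V (cl V E a)" unfolding ann_mono[OF E, symmetric] .
      hence "c \<in> cl V E a" using c(1) by (auto simp: mid_def)
      thus ?thesis using c(2) by (auto simp: cl_def)
    qed
    have fin: "\<exists>c\<in>vexps V. (\<forall>a\<in>A. a + c \<in> E) \<and> mono_poly c \<notin> P" if "A \<subseteq> keys f0" for A
    proof -
      have "finite A" by (rule finite_subset[OF that finite_keys])
      thus ?thesis using that
      proof (induction A rule: finite_induct)
        case empty
        have "(mono_poly 0 :: 'k mpoly) \<notin> P" using prime_ne[OF P] by (simp add: mono_poly_zero)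
        thus ?case by auto
      next
        case (insert a A)
        obtain c where c: "c \<in> vexps V" "\<forall>a\<in>A. a + c \<in> E" "mono_poly c \<notin> P" using insert by blast
        obtain d where d: "d \<in> vexps V" "a + d \<in> E" "mono_poly d \<notin> P" using mon insert.prems by blast
        have "mono_poly (c + d) \<notin> P"
        proof
          assume "mono_poly (c + d) \<in> P"
          hence "mono_poly c * mono_poly d \<in> P" by (simp add: mono_poly_add)
          hence "mono_poly c \<in> P \<or> mono_poly d \<in> P"
            using P poly_ring_mono[OF c(1), where 'k='k] poly_ring_mono[OF d(1), where 'k='k]
            unfolding prime_ideal_in_def by blast
          thus False using c d by blast
        qed
        moreover have "\<forall>b\<in>insert a A. b + (c + d) \<in> E"
        proof
          fix b assume b: "b \<in> insert a A"
          show "b + (c + d) \<in> E"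
          proof (cases "b = a")
            case True
            have "mon_dvd (a + d) (b + (c + d))" using True by (simp add: mon_dvd_def lookup_add)
            moreover have "b + (c + d) \<in> vexps V" using True d(2) E c(1) by (auto simp: upcl_def)
            ultimately show ?thesis using d(2) E by (auto simp: upcl_def)
          next
            case False
            hence bA: "b \<in> A" using b by simp
            have "mon_dvd (b + c) (b + (c + d))" by (simp add: mon_dvd_def lookup_add)
            moreover have "b + (c + d) \<in> vexps V" using c(2) bA E d(1) by (auto simp: upcl_def)
            ultimately show ?thesis using c(2) bA E by (auto simp: upcl_def)
          qed
        qed
        moreover have "c + d \<in> vexps V" using c(1) d(1) by simp
        ultimately show ?case by (intro bexI[of _ "c + d"] conjI)
      qed
    qed
    obtain c where c: "c \<in> vexps V" "\<forall>a\<in>keys f0. a + c \<in> E" "mono_poly c \<notin> P"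
      using fin[of "keys f0"] by blast
    have "\<forall>a\<in>keys f0. mono_poly c \<in> Q a"
    proof
      fix a assume a: "a \<in> keys f0"
      have "(mono_poly c * mono_poly a :: 'k mpoly) = mono_poly (a + c)" by (simp add: mono_poly_add add.commute)
      moreover have "a + c \<in> vexps V" using c(2) a E by (auto simp: upcl_def)
      ultimately show "mono_poly c \<in> Q a" using c a poly_ring_mono[OF c(1)] by (simp add: Q_def mono_in_mid)
    qed
    hence "mono_poly c \<in> P" by (rule QP[OF poly_ring_mono[OF c(1)]])
    thus False using c(3) by blast
  qed
  then obtain a where a: "a \<in> keys f0" "Q a \<subseteq> P" by blast
  have "P = Q a" using PQ[OF a(1)] a(2) by blast
  moreover have "a \<in> vexps V" using a(1) f0v by blast
  ultimately show ?thesis unfolding Q_def by blast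
qed



definition AS :: "nat set \<Rightarrow> (nat \<Rightarrow>\<^sub>0 nat) set \<Rightarrow> nat set set" where
  "AS V E = {S. S \<subseteq> V \<and> (\<exists>a\<in>vexps V. cl V E a = PS V S)}"

lemma Ass_char:
  assumes V: "finite V" and E: "upcl V E"
  shows "Ass (poly_ring V) (mid V E :: ('k::field) mpoly set) = (\<lambda>S. mid V (PS V S)) ` AS V E"
proof (intro set_eqI iffI)
  fix P :: "'k mpoly set" assume "P \<in> Ass (poly_ring V) (mid V E)"
  then obtain f where P: "prime_ideal_in (poly_ring V) P" and f: "f \<in> poly_ring V"
    and Pf: "P = {g \<in> poly_ring V. g * f \<in> mid V E}" by (auto simp: Ass_def)
  obtain a where a: "a \<in> vexps V" and Pa: "P = {g \<in> poly_ring V. g * mono_poly a \<in> mid V E}"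
    using lemma_H[OF E P f Pf] by blast
  have Pc: "P = mid V (cl V E a)" using Pa ann_mono[OF E, of a] by simp
  let ?S = "{i \<in> V. Poly_Mapping.single i 1 \<in> cl V E a}"
  have "cl V E a = PS V ?S"
    by (rule prime_mono_PS[OF V cl_upcl[OF E]]) (use P Pc in simp)
  hence "?S \<in> AS V E" using a by (auto simp: AS_def)
  moreover have "P = mid V (PS V ?S)" using Pc \<open>cl V E a = PS V ?S\<close> by simp
  ultimately show "P \<in> (\<lambda>S. mid V (PS V S)) ` AS V E" by blast
next
  fix P :: "'k mpoly set" assume "P \<in> (\<lambda>S. mid V (PS V S)) ` AS V E"
  then obtain S a where S: "S \<subseteq> V" and a: "a \<in> vexps V" "cl V E a = PS V S" and P: "P = mid V (PS V S)"
    by (auto simp: AS_def)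
  have pr: "prime_ideal_in (poly_ring V) P" unfolding P by (rule prime_PS[OF S])
  have "P = {g \<in> poly_ring V. g * mono_poly a \<in> mid V E}"
    using P a(2) ann_mono[OF E, of a, where 'k='k] by simp
  moreover have "(mono_poly a :: 'k mpoly) \<in> poly_ring V" by (rule poly_ring_mono[OF a(1)])
  ultimately show "P \<in> Ass (poly_ring V) (mid V E)" using pr by (auto simp: Ass_def)
qed

lemma PS_inj:
  assumes S: "S \<subseteq> V" and S': "S' \<subseteq> V"
    and eq: "(mid V (PS V S) :: ('k::field) mpoly set) = mid V (PS V S')"
  shows "S = S'"
proof -
  have "PS V S \<subseteq> vexps V" "PS V S' \<subseteq> vexps V" by (auto simp: PS_def)
  hence "PS V S = PS V S'" using eq mid_eq_iff[where 'k='k] by blast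
  moreover have "i \<in> T \<longleftrightarrow> Poly_Mapping.single i 1 \<in> PS V T" if "i \<in> V" "T \<subseteq> V" for i T
    using that by (auto simp: PS_def vexps_def lookup_single_if)
  ultimately show ?thesis using S S' by blast
qed

lemma Ass_mono_AS:
  assumes V: "finite V" and E1: "upcl V E1" and E2: "upcl V E2"
    and sub: "Ass (poly_ring V) (mid V E1 :: ('k::field) mpoly set) \<subseteq> Ass (poly_ring V) (mid V E2 :: 'k mpoly set)"
  shows "AS V E1 \<subseteq> AS V E2"
proof
  fix S assume S: "S \<in> AS V E1"
  hence "(mid V (PS V S) :: 'k mpoly set) \<in> Ass (poly_ring V) (mid V E1)" using Ass_char[OF V E1] by blast
  hence "(mid V (PS V S) :: 'k mpoly set) \<in> (\<lambda>S. mid V (PS V S)) ` AS V E2" using sub Ass_char[OF V E2] by blast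
  then obtain S' where S': "S' \<in> AS V E2" "(mid V (PS V S) :: 'k mpoly set) = mid V (PS V S')" by blast
  have "S = S'" using PS_inj[OF _ _ S'(2)] S S'(1) by (auto simp: AS_def)
  thus "S \<in> AS V E2" using S'(1) by simp
qed

lemma AS_Ass_mono:
  assumes V: "finite V" and E1: "upcl V E1" and E2: "upcl V E2" and sub: "AS V E1 \<subseteq> AS V E2"
  shows "Ass (poly_ring V) (mid V E1 :: ('k::field) mpoly set) \<subseteq> Ass (poly_ring V) (mid V E2 :: 'k mpoly set)"
  unfolding Ass_char[OF V E1] Ass_char[OF V E2] using sub by blast



lemma lookup_pm_simps:
  "lookup (a + b) i = lookup a i + lookup b i"
  "lookup (Poly_Mapping.single k n) i = (if k = i then n else 0)"
  by (simp_all add: lookup_add lookup_single_if)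

lemma AS_sat_to:
  assumes V: "finite V" and j: "j \<in> V" and E: "upcl V E" and S: "S \<in> AS (V - {j}) (sat V j E)"
  shows "S \<in> AS V E"
proof -
  from S obtain a' where SV: "S \<subseteq> V - {j}" and a': "a' \<in> vexps (V - {j})"
    and cla: "cl (V - {j}) (sat V j E) a' = PS (V - {j}) S" by (auto simp: AS_def)
  have ex: "\<exists>N. a' + Poly_Mapping.single i 1 + Poly_Mapping.single j N \<in> E" if i: "i \<in> S" for i
  proof -
    have "Poly_Mapping.single i 1 \<in> PS (V - {j}) S" using i SV
      by (auto simp: PS_def vexps_def lookup_single_if intro!: bexI[of _ i])
    hence "Poly_Mapping.single i 1 \<in> cl (V - {j}) (sat V j E) a'" using cla by simp
    hence "a' + Poly_Mapping.single i 1 \<in> sat V j E" by (simp add: cl_def)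
    thus ?thesis by (auto simp: sat_def)
  qed
  define Nf where "Nf = (\<lambda>i. SOME N. a' + Poly_Mapping.single i 1 + Poly_Mapping.single j N \<in> E)"
  have Nf: "a' + Poly_Mapping.single i 1 + Poly_Mapping.single j (Nf i) \<in> E" if "i \<in> S" for i
    unfolding Nf_def using ex[OF that] by (rule someI_ex)
  have finS: "finite S" using SV V finite_subset by (metis finite_Diff)
  define N where "N = (\<Sum>i\<in>S. Nf i)"
  have NfN: "Nf i \<le> N" if "i \<in> S" for i unfolding N_def by (rule member_le_sum[OF that _ finS]) simp
  define a where "a = a' + Poly_Mapping.single j N"
  have av: "a \<in> vexps V" unfolding a_def by (rule vexps_plus_single[OF j a'])
  have jS: "j \<notin> S" using SV by blast
  have a'j: "lookup a' j = 0" using a' by (auto simp: vexps_def in_keys_iff)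
  have "cl V E a = PS V S"
  proof (intro set_eqI iffI)
    fix c assume c: "c \<in> cl V E a"
    hence cv: "c \<in> vexps V" and acE: "a + c \<in> E" by (auto simp: cl_def)
    define c' where "c' = er j c"
    have c'v: "c' \<in> vexps (V - {j})" unfolding c'_def by (rule er_vexps[OF cv])
    have eq: "a' + c' + Poly_Mapping.single j (N + lookup c j) = a + c"
      by (rule poly_mapping_eqI) (simp add: a_def c'_def lookup_pm_simps lookup_er a'j)
    have "a' + c' \<in> vexps (V - {j})" using a' c'v by simp
    moreover have "a' + c' + Poly_Mapping.single j (N + lookup c j) \<in> E" using eq acE by simp
    ultimately have "a' + c' \<in> sat V j E" unfolding sat_def by blast
    hence "c' \<in> cl (V - {j}) (sat V j E) a'" using c'v by (simp add: cl_def)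
    hence "c' \<in> PS (V - {j}) S" using cla by simp
    then obtain i where i: "i \<in> S" "0 < lookup c' i" by (auto simp: PS_def)
    have "i \<noteq> j" using i(1) jS by blast
    hence "0 < lookup c i" using i(2) by (simp add: c'_def lookup_er)
    thus "c \<in> PS V S" using cv i(1) by (auto simp: PS_def)
  next
    fix c assume c: "c \<in> PS V S"
    then obtain i where cv: "c \<in> vexps V" and i: "i \<in> S" "0 < lookup c i" by (auto simp: PS_def)
    have ij: "i \<noteq> j" using i(1) jS by blast
    have "mon_dvd (a' + Poly_Mapping.single i 1 + Poly_Mapping.single j (Nf i)) (a + c)"
      unfolding mon_dvd_def
    proof
      fix k
      show "lookup (a' + Poly_Mapping.single i 1 + Poly_Mapping.single j (Nf i)) k \<le> lookup (a + c) k"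
        using NfN[OF i(1)] i(2) ij by (auto simp: a_def lookup_pm_simps)
    qed
    moreover have "a + c \<in> vexps V" using av cv by simp
    ultimately have "a + c \<in> E" using Nf[OF i(1)] E by (auto simp: upcl_def)
    thus "c \<in> cl V E a" using cv by (simp add: cl_def)
  qed
  moreover have "S \<subseteq> V" using SV by blast
  ultimately show ?thesis using av by (auto simp: AS_def)
qed

lemma AS_sat_from:
  assumes j: "j \<in> V" and E: "upcl V E" and S: "S \<in> AS V E" and SV: "S \<subseteq> V - {j}"
  shows "S \<in> AS (V - {j}) (sat V j E)"
proof -
  from S obtain a where av: "a \<in> vexps V" and cla: "cl V E a = PS V S" by (auto simp: AS_def)
  define a' where "a' = er j a"
  have a'v: "a' \<in> vexps (V - {j})" unfolding a'_def by (rule er_vexps[OF av])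
  have jS: "j \<notin> S" using SV by blast
  have "cl (V - {j}) (sat V j E) a' = PS (V - {j}) S"
  proof (intro set_eqI iffI)
    fix c assume "c \<in> cl (V - {j}) (sat V j E) a'"
    hence cv: "c \<in> vexps (V - {j})" and s: "a' + c \<in> sat V j E" by (auto simp: cl_def)
    then obtain N where N: "a' + c + Poly_Mapping.single j N \<in> E" by (auto simp: sat_def)
    have cN: "c + Poly_Mapping.single j N \<in> vexps V" by (rule vexps_plus_single[OF j cv])
    have "mon_dvd (a' + c + Poly_Mapping.single j N) (a + (c + Poly_Mapping.single j N))"
      by (simp add: mon_dvd_def a'_def lookup_pm_simps lookup_er)
    moreover have "a + (c + Poly_Mapping.single j N) \<in> vexps V" using av cN by simp
    ultimately have "a + (c + Poly_Mapping.single j N) \<in> E" using N E by (auto simp: upcl_def)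
    hence "c + Poly_Mapping.single j N \<in> PS V S" using cN cla by (auto simp: cl_def)
    then obtain i where i: "i \<in> S" "0 < lookup (c + Poly_Mapping.single j N) i" by (auto simp: PS_def)
    have "i \<noteq> j" using i(1) jS by blast
    hence "0 < lookup c i" using i(2) by (simp add: lookup_pm_simps)
    thus "c \<in> PS (V - {j}) S" using cv i(1) by (auto simp: PS_def)
  next
    fix c assume "c \<in> PS (V - {j}) S"
    then obtain i where cv: "c \<in> vexps (V - {j})" and i: "i \<in> S" "0 < lookup c i" by (auto simp: PS_def)
    have cN: "c + Poly_Mapping.single j 0 \<in> vexps V" by (rule vexps_plus_single[OF j cv])
    hence cV: "c \<in> vexps V" by simp
    have "c \<in> PS V S" using cV i by (auto simp: PS_def)
    hence "a + c \<in> E" using cla by (auto simp: cl_def)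
    moreover have "a + c = a' + c + Poly_Mapping.single j (lookup a j)"
      by (rule poly_mapping_eqI) (simp add: a'_def lookup_pm_simps lookup_er)
    ultimately have "a' + c + Poly_Mapping.single j (lookup a j) \<in> E" by simp
    moreover have "a' + c \<in> vexps (V - {j})" using a'v cv by simp
    ultimately have "a' + c \<in> sat V j E" by (auto simp: sat_def)
    thus "c \<in> cl (V - {j}) (sat V j E) a'" using cv by (simp add: cl_def)
  qed
  thus ?thesis using a'v SV by (auto simp: AS_def)
qed



theorem corollary3p22:
  fixes n j :: nat and I :: "('k::field) mpoly set"
  assumes "1 \<le> j" and "j \<le> n"
    and "monomial_ideal {1..n} I"
    and "copersistent (poly_ring {1..n}) I"
  shows "copersistent (poly_ring ({1..n} - {j})) (contraction {1..n} j I)"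
proof -
  define V where "V = {1..n}"
  have V: "finite V" by (simp add: V_def)
  have j: "j \<in> V" using assms(1,2) by (simp add: V_def)
  have V': "finite (V - {j})" using V by simp
  obtain E where E: "upcl V E" and I: "I = mid V E"
    using monomial_mid[OF assms(3)[folded V_def]] by blast
  have J: "contraction V j I = mid (V - {j}) (sat V j E)"
    by (rule contraction_mid[OF V j E I])
  have powI: "ideal_pow (poly_ring V) I k = mid V (pw V E k)" for k
    unfolding I by (rule pow_mid[OF E])
  have powJ: "ideal_pow (poly_ring (V - {j})) (contraction V j I) k = (mid (V - {j}) (sat V j (pw V E k)) :: 'k mpoly set)" for k
    unfolding J pow_mid[OF sat_upcl[OF E]] sat_pw[OF j E] ..
  have cop: "Ass (poly_ring V) (ideal_pow (poly_ring V) I (Suc k)) \<subseteq> Ass (poly_ring V) (ideal_pow (poly_ring V) I k)"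
    if "k \<ge> 1" for k
    using assms(4) that unfolding copersistent_def V_def by blast
  show ?thesis
    unfolding copersistent_def V_def[symmetric]
  proof (intro allI impI)
    fix k :: nat assume k: "k \<ge> 1"
    have "Ass (poly_ring V) (mid V (pw V E (Suc k)) :: 'k mpoly set) \<subseteq> Ass (poly_ring V) (mid V (pw V E k))"
      using cop[OF k] unfolding powI .
    hence "AS V (pw V E (Suc k)) \<subseteq> AS V (pw V E k)"
      by (rule Ass_mono_AS[OF V pw_upcl pw_upcl])
    hence sub: "AS (V - {j}) (sat V j (pw V E (Suc k))) \<subseteq> AS (V - {j}) (sat V j (pw V E k))"
    proof -
      assume sub: "AS V (pw V E (Suc k)) \<subseteq> AS V (pw V E k)"
      show ?thesis
      proof
        fix S assume S: "S \<in> AS (V - {j}) (sat V j (pw V E (Suc k)))"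
        hence SV: "S \<subseteq> V - {j}" by (simp add: AS_def)
        have "S \<in> AS V (pw V E (Suc k))" by (rule AS_sat_to[OF V j pw_upcl S])
        hence "S \<in> AS V (pw V E k)" using sub by blast
        thus "S \<in> AS (V - {j}) (sat V j (pw V E k))" by (rule AS_sat_from[OF j pw_upcl _ SV])
      qed
    qed
    show "Ass (poly_ring (V - {j})) (ideal_pow (poly_ring (V - {j})) (contraction V j I) (Suc k))
        \<subseteq> Ass (poly_ring (V - {j})) (ideal_pow (poly_ring (V - {j})) (contraction V j I) k)"
      unfolding powJ by (rule AS_Ass_mono[OF V' sat_upcl[OF pw_upcl] sat_upcl[OF pw_upcl] sub])
  qed
qed


end
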